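(* Let $d\ge2$ be an integer, $D_1,\dots,D_d$ real constants, $D=\sum_iD_i$. Define $m:[-D^2/d,\pi^2/d)\to[0,\infty)$ as follows (with $\mu=-\lambda$ when $\lambda<0$): $$m(\lambda)=\begin{cases}0 & \text{if } \lambda=-D^2/d<0,\\[2pt] \left|\ln\left(\dfrac{\big(\frac{e^{\sqrt{d\mu}}}{\sqrt{-C_-}}+1\big)\big(-\frac{1}{\sqrt{-C_-}}+1\big)}{\big(1-\frac{e^{\sqrt{d\mu}}}{\sqrt{-C_-}}\big)\big(1+\frac{1}{\sqrt{-C_-}}\big)}\right)\right| & \text{if } -D^2/d<\lambda<0,\\[2pt] |D| & \text{if } \lambda=0,\\[2pt] \left|\ln\dfrac{\tan(C_++\sqrt{d\lambda})+\sec(C_++\sqrt{d\lambda})}{\tan(C_+)+\sec(C_+)}\right| & \text{if } 0<\lambda<\pi^2/d,\end{cases}$$ where $C_-=\dfrac{e^{2\sqrt{d\mu}}-e^{D+\sqrt{d\mu}}}{e^{D+\sqrt{d\mu}}-1}$ and $C_+=\arctan\left(\dfrac{\cos(\sqrt{d\lambda})-e^D}{\sin(\sqrt{d\lambda})}\right)$. For $\lambda\in[-D^2/d,\pi^2/d)$, let $L=(L_1,\dots,L_d)\in C^1([0,1];\mathbb{R}^d)$ be the unique solution of $$L_i'=-\Big(\sum_{k=1}^dL_k\Big)L_i-\lambda\ \text{ on }[0,1],\qquad\int_0^1L_i(r)\,dr=D_i\qquad(i=1,\dots,d).$$ Then $L$ satisfies $$(d-1)\lambda=\sum_{i=1}^dL_i(0)^2-\Big(\sum_{i=1}^dL_i(0)\Big)^2$$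 if and only if $$m(\lambda)=\sqrt{\frac{d}{d-1}\sum_{i=1}^d\Big(D_i-\frac{D}{d}\Big)^2}.$$
   Context: For $-D^2/d<\lambda<0$ one has $C_-<0$, so $\sqrt{-C_-}$ is defined. *)

theory Defs
  imports "HOL-Analysis.Analysis"
begin

definition mfun :: "nat \<Rightarrow> real \<Rightarrow> real \<Rightarrow> real" where
  "mfun d D lam =
    (if lam = - (D^2) / real d \<and> lam < 0 then 0
     else if lam < 0 then
       (let mu = - lam; s = sqrt (real d * mu);
            Cm = (exp (2 * s) - exp (D + s)) / (exp (D + s) - 1);
            r = sqrt (- Cm)
        in \<bar>ln (((exp s / r + 1) * (- 1 / r + 1)) / ((1 - exp s / r) * (1 + 1 / r)))\<bar>)
     else if lam = 0 then \<bar>D\<bar>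
     else
       (let s = sqrt (real d * lam);
            Cp = arctan ((cos s - exp D) / sin s)
        in \<bar>ln ((tan (Cp + s) + 1 / cos (Cp + s)) / (tan Cp + 1 / cos Cp))\<bar>))"

end

theory Submission
  imports Defs
begin

lemma const01:
  assumes "\<And>t. t \<in> {0..1} \<Longrightarrow> (f has_real_derivative 0) (at t within {0..1})"
    and "t \<in> {0..1::real}"
  shows "f t = f 0"
proof -
  obtain c where "\<forall>x\<in>{0..1::real}. f x = c"
    using has_field_derivative_zero_constant[of "{0..1::real}" f] assms(1) by auto
  then show ?thesis using assms(2) by auto
qed

lemma ftc01:
  assumes "\<And>t. t \<in> {0..1} \<Longrightarrow> (H has_real_derivative g t) (at t within {0..1::real})"
  shows "integral {0..1} g = H 1 - H 0"
proof -
  have "(g has_integral (H 1 - H 0)) {0..1}"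
    using fundamental_theorem_of_calculus[of 0 1 H g] assms
    by (auto simp: has_real_derivative_iff_has_vector_derivative)
  then show ?thesis by (rule integral_unique)
qed

lemma one_plus_sin_pos: "cos (x::real) > 0 \<Longrightarrow> 1 + sin x > 0"
proof -
  assume c: "cos x > 0"
  have "sin x \<ge> -1" by (rule sin_ge_minus_one)
  moreover have "sin x \<noteq> -1"
  proof
    assume "sin x = -1"
    then have "cos x ^ 2 = 0" using sin_cos_squared_add[of x] by simp
    then show False using c by simp
  qed
  ultimately show ?thesis by linarith
qed

lemma one_minus_sin_pos: "cos (x::real) > 0 \<Longrightarrow> 1 - sin x > 0"
  using one_plus_sin_pos[of "-x"] by simp

lemma aux1: "(c::real) > 0 \<Longrightarrow> p > 0 \<Longrightarrow> 1/(p/c) * ((-k*p)/c^2) = -k/c"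
  by (simp add: power2_eq_square)

lemma secG:
  assumes "cos (a - k*t) > 0"
  shows "((\<lambda>t. ln ((1 + sin (a - k*t)) / cos (a - k*t))) has_real_derivative (- k / cos (a - k*t))) (at t within S)"
proof -
  have p: "1 + sin (a - k*t) > 0" using one_plus_sin_pos assms by blast
  have "((\<lambda>t. ln ((1 + sin (a - k*t)) / cos (a - k*t))) has_real_derivative
     (1 / ((1 + sin (a - k*t)) / cos (a - k*t))) *
     (((cos (a - k*t) * (-k)) * cos (a - k*t) - (1 + sin (a - k*t)) * (- sin (a - k*t) * (-k))) / (cos (a - k*t))^2)) (at t within S)"
    using assms p
    by (auto intro!: derivative_eq_intros simp: power2_eq_square)
  moreover have "(1 / ((1 + sin (a - k*t)) / cos (a - k*t))) *
     (((cos (a - k*t) * (-k)) * cos (a - k*t) - (1 + sin (a - k*t)) * (- sin (a - k*t) * (-k))) / (cos (a - k*t))^2)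
     = - k / cos (a - k*t)"
  proof -
    have e: "cos (a - k*t)^2 = 1 - sin (a - k*t)^2"
      using sin_cos_squared_add[of "a - k*t"] by linarith
    have n: "((cos (a - k*t) * (-k)) * cos (a - k*t) - (1 + sin (a - k*t)) * (- sin (a - k*t) * (-k)))
        = - k * (1 + sin (a - k*t))"
      by (simp add: algebra_simps power2_eq_square[symmetric] e)
    show ?thesis unfolding n using aux1[OF assms p, of k] by simp
  qed
  ultimately show ?thesis by simp
qed

lemma trig1:
  assumes "cos (x::real) > 0"
  shows "tan (- x) + 1 / cos (- x) = cos x / (1 + sin x)"
proof -
  have p: "1 + sin x > 0" using one_plus_sin_pos assms by blast
  have e: "cos x * cos x = (1 - sin x) * (1 + sin x)"
    using sin_cos_squared_add[of x] by (simp add: algebra_simps power2_eq_square)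
  have "tan (- x) + 1 / cos (- x) = (1 - sin x) / cos x"
    using assms by (simp add: tan_def field_simps)
  also have "\<dots> = cos x / (1 + sin x)"
    using assms p e by (simp add: field_simps)
  finally show ?thesis .
qed

lemma key_pos:
  fixes E q :: "real \<Rightarrow> real" and c s0 D :: real
  assumes c0: "0 < c" and cpi: "c < pi^2"
    and dE: "\<And>t. t \<in> {0..1} \<Longrightarrow> (E has_real_derivative q t) (at t within {0..1})"
    and dq: "\<And>t. t \<in> {0..1} \<Longrightarrow> (q has_real_derivative (- c * E t)) (at t within {0..1})"
    and E0: "E 0 = 1" and q0: "q 0 = s0" and Epos: "\<And>t. t \<in> {0..1} \<Longrightarrow> E t > 0"
    and E1: "E 1 = exp D"
    and Jpos: "integral {0..1} (\<lambda>t. 1 / E t) > 0"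
  shows "0 \<le> s0^2 + c \<and> (let s = sqrt c; Cp = arctan ((cos s - exp D) / sin s)
           in \<bar>ln ((tan (Cp + s) + 1 / cos (Cp + s)) / (tan Cp + 1 / cos Cp))\<bar>)
         = sqrt (s0^2 + c) * integral {0..1} (\<lambda>t. 1 / E t)"
proof -
  define k where "k = sqrt c"
  have k0: "k > 0" and kc: "k^2 = c" using c0 by (auto simp: k_def)
  have "sqrt c < sqrt (pi^2)" using cpi by (simp only: real_sqrt_less_iff)
  then have kpi: "k < pi" unfolding k_def by simp
  have f1: "k * E t * cos (k*t) - q t * sin (k*t) = k" if t: "t \<in> {0..1}" for t
  proof -
    have "k * E t * cos (k*t) - q t * sin (k*t) = k * E 0 * cos (k*0) - q 0 * sin (k*0)"
    proof (rule const01[OF _ t])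
      fix x assume x: "x \<in> {0..1::real}"
      show "((\<lambda>t. k * E t * cos (k*t) - q t * sin (k*t)) has_real_derivative 0) (at x within {0..1})"
        using dE[OF x] dq[OF x]
        by (auto intro!: derivative_eq_intros simp: kc[symmetric] algebra_simps power2_eq_square)
    qed
    then show ?thesis using E0 by simp
  qed
  have f2: "q t * cos (k*t) + k * E t * sin (k*t) = s0" if t: "t \<in> {0..1}" for t
  proof -
    have "q t * cos (k*t) + k * E t * sin (k*t) = q 0 * cos (k*0) + k * E 0 * sin (k*0)"
    proof (rule const01[OF _ t])
      fix x assume x: "x \<in> {0..1::real}"
      show "((\<lambda>t. q t * cos (k*t) + k * E t * sin (k*t)) has_real_derivative 0) (at x within {0..1})"
        using dE[OF x] dq[OF x]
        by (auto intro!: derivative_eq_intros simp: kc[symmetric] algebra_simps power2_eq_square)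
    qed
    then show ?thesis using q0 by simp
  qed
  have hE: "E t = cos (k*t) + s0 / k * sin (k*t)" if t: "t \<in> {0..1}" for t
  proof -
    have "k * E t = k * E t * ((sin (k*t))^2 + (cos (k*t))^2)" by simp
    also have "\<dots> = (k * E t * cos (k*t) - q t * sin (k*t)) * cos (k*t)
        + (q t * cos (k*t) + k * E t * sin (k*t)) * sin (k*t)"
      by algebra
    also have "\<dots> = k * cos (k*t) + s0 * sin (k*t)" using f1[OF t] f2[OF t] by simp
    finally show ?thesis using k0 by (simp add: field_simps)
  qed
  define th where "th = arctan (s0 / k)"
  have cth: "cos th > 0" unfolding th_def
    by (intro cos_gt_zero_pi arctan_lbound arctan_ubound)
  have tth: "sin th / cos th = s0 / k" using tan_arctan[of "s0/k"] by (simp add: th_def tan_def)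
  have hE2: "E t = cos (th - k*t) / cos th" if t: "t \<in> {0..1}" for t
  proof -
    have "cos (th - k*t) / cos th = cos (k*t) + (sin th / cos th) * sin (k*t)"
      using cth by (simp add: cos_diff field_simps)
    then show ?thesis using hE[OF t] tth by simp
  qed
  have cpos: "cos (th - k*t) > 0" if t: "t \<in> {0..1}" for t
  proof -
    have "cos (th - k*t) = E t * cos th" using hE2[OF t] cth by simp
    then show ?thesis using Epos[OF t] cth by simp
  qed
  define G where "G = (\<lambda>x::real. ln ((1 + sin x) / cos x))"
  have dH: "((\<lambda>t. - (cos th / k) * ln ((1 + sin (th - k*t)) / cos (th - k*t))) has_real_derivative (1 / E t))
      (at t within {0..1})" if t: "t \<in> {0..1}" for t
  proof -
    have "((\<lambda>t. - (cos th / k) * ln ((1 + sin (th - k*t)) / cos (th - k*t))) has_real_derivative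
       (- (cos th / k) * (- k / cos (th - k*t)))) (at t within {0..1})"
      by (rule DERIV_cmult[OF secG[OF cpos[OF t]]])
    moreover have "- (cos th / k) * (- k / cos (th - k*t)) = 1 / E t"
      using hE2[OF t] k0 cth cpos[OF t] by simp
    ultimately show ?thesis by simp
  qed
  have J: "integral {0..1} (\<lambda>t. 1 / E t) = (cos th / k) * (G th - G (th - k))"
    using ftc01[OF dH] by (simp add: G_def algebra_simps)
  have s0th: "s0 = k * sin th / cos th" using tth k0 by (simp add: field_simps)
  have sq: "sin th ^ 2 = 1 - cos th ^ 2" using sin_cos_squared_add[of th] by linarith
  have "s0^2 + c = (k / cos th)^2"
    unfolding s0th kc[symmetric] using cth
    apply (simp add: field_simps power2_eq_square)
    using sin_cos_squared_add[of th] unfolding power2_eq_square by algebra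
  then have sqr: "sqrt (s0^2 + c) = k / cos th" using k0 cth by simp
  have prod: "sqrt (s0^2 + c) * integral {0..1} (\<lambda>t. 1 / E t) = G th - G (th - k)"
    unfolding sqr J using k0 cth by simp
  have nn: "0 \<le> G th - G (th - k)"
  proof -
    have "0 \<le> s0^2 + c" using c0 by (simp add: add_nonneg_nonneg less_imp_le)
    then show ?thesis unfolding prod[symmetric] using Jpos
      by (intro mult_nonneg_nonneg real_sqrt_ge_zero) (auto simp: less_imp_le)
  qed
  have sk: "sin k > 0" using sin_gt_zero k0 kpi by blast
  have eD: "exp D = cos k + s0 / k * sin k" using E1 hE[of 1] by simp
  have Cp: "arctan ((cos k - exp D) / sin k) = - th"
    unfolding eD th_def using sk by (simp add: arctan_minus[symmetric])
  have c1: "cos (th - k) > 0" using cpos[of 1] by simp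
  have r1: "tan (- th + k) + 1 / cos (- th + k) = cos (th - k) / (1 + sin (th - k))"
    using trig1[OF c1] by simp
  have r2: "tan (- th) + 1 / cos (- th) = cos th / (1 + sin th)"
    using trig1[OF cth] by simp
  have p1: "1 + sin (th - k) > 0" using one_plus_sin_pos c1 by blast
  have p2: "1 + sin th > 0" using one_plus_sin_pos cth by blast
  have "(cos (th - k) / (1 + sin (th - k))) / (cos th / (1 + sin th))
      = ((1 + sin th) / cos th) / ((1 + sin (th - k)) / cos (th - k))"
    using p1 p2 c1 cth by (simp add: field_simps)
  then have "ln ((cos (th - k) / (1 + sin (th - k))) / (cos th / (1 + sin th)))
     = ln (((1 + sin th) / cos th) / ((1 + sin (th - k)) / cos (th - k)))" by (simp only:)
  also have "\<dots> = G th - G (th - k)"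
    unfolding G_def by (rule ln_divide_pos) (use p1 p2 c1 cth in simp_all)
  finally have "ln ((cos (th - k) / (1 + sin (th - k))) / (cos th / (1 + sin th))) = G th - G (th - k)" .
  then have "(let s = sqrt c; Cp = arctan ((cos s - exp D) / sin s)
           in \<bar>ln ((tan (Cp + s) + 1 / cos (Cp + s)) / (tan Cp + 1 / cos Cp))\<bar>) = G th - G (th - k)"
    using nn unfolding Let_def k_def[symmetric] Cp r1 r2 by simp
  then show ?thesis using prod c0 by simp
qed

lemma key_zero:
  fixes E q :: "real \<Rightarrow> real" and c s0 D :: real
  assumes c0: "c = 0"
    and dE: "\<And>t. t \<in> {0..1} \<Longrightarrow> (E has_real_derivative q t) (at t within {0..1})"
    and dq: "\<And>t. t \<in> {0..1} \<Longrightarrow> (q has_real_derivative (- c * E t)) (at t within {0..1})"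
    and E0: "E 0 = 1" and q0: "q 0 = s0" and Epos: "\<And>t. t \<in> {0..1} \<Longrightarrow> E t > 0"
    and E1: "E 1 = exp D"
    and Jpos: "integral {0..1} (\<lambda>t. 1 / E t) > 0"
  shows "0 \<le> s0^2 + c \<and> \<bar>D\<bar> = sqrt (s0^2 + c) * integral {0..1} (\<lambda>t. 1 / E t)"
proof -
  have hq: "q t = s0" if t: "t \<in> {0..1}" for t
    using const01[of q t] dq c0 t q0 by simp
  have hE: "E t = 1 + s0 * t" if t: "t \<in> {0..1}" for t
  proof -
    have "E t - s0 * t = E 0 - s0 * 0"
    proof (rule const01[OF _ t])
      fix x assume x: "x \<in> {0..1::real}"
      show "((\<lambda>t. E t - s0 * t) has_real_derivative 0) (at x within {0..1})"
        using dE[OF x] hq[OF x] by (auto intro!: derivative_eq_intros)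
    qed
    then show ?thesis using E0 by simp
  qed
  show ?thesis
  proof (cases "s0 = 0")
    case True
    then have "exp D = 1" using E1 hE[of 1] by simp
    then have "D = 0" by simp
    then show ?thesis using True c0 by simp
  next
    case False
    have dH: "((\<lambda>t. ln (1 + s0 * t) / s0) has_real_derivative (1 / E t)) (at t within {0..1})"
      if t: "t \<in> {0..1}" for t
    proof -
      have p: "1 + s0 * t > 0" using Epos[OF t] hE[OF t] by simp
      have "((\<lambda>t. ln (1 + s0 * t) / s0) has_real_derivative (s0 / (1 + s0 * t) / s0)) (at t within {0..1})"
        using p by (auto intro!: derivative_eq_intros)
      then show ?thesis using False hE[OF t] by simp
    qed
    have J: "integral {0..1} (\<lambda>t. 1 / E t) = D / s0"
      using ftc01[OF dH] E1 hE[of 1] by simp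
    have "D / s0 > 0" using J Jpos by simp
    then have "\<bar>s0\<bar> * (D / s0) = \<bar>D\<bar>"
      using False by (metis abs_of_pos abs_mult nonzero_mult_div_cancel_left times_divide_eq_right)
    then show ?thesis unfolding J using c0 by simp
  qed
qed

lemma aux3: "(k::real) > 0 \<Longrightarrow> Y > 0 \<Longrightarrow> ((s0+k)*Y - (s0-k)/Y)/(2*k) = (s0+k)/(2*k)*Y + (k-s0)/(2*k)/Y"
  by (simp add: field_simps)

lemma aux2: "(b::real) \<noteq> 0 \<Longrightarrow> 1/(x/b) * (y/b) = y/x"
  by (simp add: field_simps)

lemma dlnlin:
  fixes k a b t :: real
  assumes "(exp (k*t) + a) / b > 0"
  shows "((\<lambda>t. ln ((exp (k*t) + a) / b)) has_real_derivative (k * exp (k*t) / (exp (k*t) + a))) (at t within S)"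
proof -
  have b: "b \<noteq> 0" using assms by auto
  have n: "exp (k*t) + a \<noteq> 0" using assms by auto
  have "((\<lambda>t. ln ((exp (k*t) + a) / b)) has_real_derivative
     (1 / ((exp (k*t) + a) / b)) * ((exp (k*t) * k) / b)) (at t within S)"
    using assms by (auto intro!: derivative_eq_intros)
  moreover have "(1 / ((exp (k*t) + a) / b)) * ((exp (k*t) * k) / b) = k * exp (k*t) / (exp (k*t) + a)"
    using b n by (simp add: aux2)
  ultimately show ?thesis by simp
qed

lemma sq_lt_of_abs: "-k < (D::real) \<Longrightarrow> D < k \<Longrightarrow> D^2 < k^2"
proof -
  assume "-k < D" "D < k"
  then have "(D - k) * (D + k) < 0" by (intro mult_neg_pos) auto
  then show ?thesis by (simp add: algebra_simps power2_eq_square)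
qed

lemma aux4:
  fixes A Y r :: real
  assumes "A*(Y^2 - r^2) > 0" "A*(1 - r^2) > 0" "r > 0" "Y > 0"
  shows "(Y + - r)/(1 - r) > 0"
proof -
  have "(A*(Y^2 - r^2)) * (A*(1 - r^2)) > 0" using assms by simp
  then have "A^2 * (((Y - r)*(1 - r)) * ((Y + r)*(1 + r))) > 0" by (simp add: algebra_simps power2_eq_square)
  then have "((Y - r)*(1 - r)) * ((Y + r)*(1 + r)) > 0" by (simp add: zero_less_mult_iff)
  moreover have "(Y + r)*(1 + r) > 0" using assms by simp
  ultimately have "(Y - r)*(1 - r) > 0" by (simp add: zero_less_mult_iff)
  then show ?thesis by (simp add: zero_less_mult_iff zero_less_divide_iff)
qed

lemma aux5:
  fixes A Y r k :: real
  assumes "Y > 0" "r > 0" "k > 0" "A \<noteq> 0" "Y \<noteq> r"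
  shows "(k*Y/(Y + -r) - k*Y/(Y+r))/(2*r*k*A) = 1/(A*(Y^2-r^2)/Y)"
proof -
  have n: "Y + -r \<noteq> 0" "Y + r \<noteq> 0" using assms by auto
  have e1: "k*Y/(Y + -r) - k*Y/(Y+r) = (2*r*k*Y) / ((Y + -r)*(Y+r))"
    using n by (simp add: field_simps)
  have e2: "Y^2 - r^2 = (Y + -r)*(Y+r)" by (simp add: algebra_simps power2_eq_square)
  show ?thesis unfolding e1 e2 using n assms by simp
qed
lemma aux6:
  fixes X r :: real
  assumes "r > 0" "X \<noteq> r" "r \<noteq> 1"
  shows "((X/r+1)*(-1/r+1))/((1-X/r)*(1+1/r)) = ((X+r)/(1+r))/((X + -r)/(1-r))"
proof -
  have n: "X + -r \<noteq> 0" "1 - r \<noteq> 0" "1 + r \<noteq> 0" "r - X \<noteq> 0" "r \<noteq> 0" using assms by auto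
  have a: "(X/r+1)*(-1/r+1) = ((X+r)*(1-r)) / (-(r*r))" using n by (simp add: field_simps)
  have b: "(1-X/r)*(1+1/r) = ((X + -r)*(1+r)) / (-(r*r))" using n by (simp add: field_simps)
  show ?thesis unfolding a b using n by simp
qed
lemma key_neg:
  fixes E q :: "real \<Rightarrow> real" and s0 D lam :: real and d :: nat
  assumes d0: "d > 0" and lneg: "lam < 0" and lD: "- (D^2) / real d \<le> lam"
    and dE: "\<And>t. t \<in> {0..1} \<Longrightarrow> (E has_real_derivative q t) (at t within {0..1})"
    and dq: "\<And>t. t \<in> {0..1} \<Longrightarrow> (q has_real_derivative (- (real d * lam) * E t)) (at t within {0..1})"
    and E0: "E 0 = 1" and q0: "q 0 = s0" and Epos: "\<And>t. t \<in> {0..1} \<Longrightarrow> E t > 0"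
    and E1: "E 1 = exp D"
    and Jpos: "integral {0..1} (\<lambda>t. 1 / E t) > 0"
  shows "0 \<le> s0^2 + real d * lam \<and> mfun d D lam = sqrt (s0^2 + real d * lam) * integral {0..1} (\<lambda>t. 1 / E t)"
proof -
  define c where "c = real d * lam"
  define J where "J = integral {0..1} (\<lambda>t. 1 / E t)"
  have cneg: "c < 0" using d0 lneg by (simp add: c_def mult_pos_neg)
  define k where "k = sqrt (- c)"
  have k0: "k > 0" and kc: "k^2 = - c" using cneg by (auto simp: k_def)
  have lamk: "lam = - (k^2) / real d" using d0 kc by (simp add: c_def field_simps)
  have kD: "k^2 \<le> D^2"
  proof -
    have "- (D^2) / real d \<le> - (k^2) / real d" using lD lamk by simp
    then show ?thesis using d0 by (simp add: divide_le_cancel)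
  qed
  have dq': "(q has_real_derivative (k^2 * E t)) (at t within {0..1})" if t: "t \<in> {0..1}" for t
  proof -
    have "- (real d * lam) * E t = k^2 * E t" using kc by (simp add: c_def)
    then show ?thesis using dq[OF t] by simp
  qed
  have g1: "(q t + k * E t) * exp (- (k*t)) = s0 + k" if t: "t \<in> {0..1}" for t
  proof -
    have "(q t + k * E t) * exp (- (k*t)) = (q 0 + k * E 0) * exp (- (k*0))"
    proof (rule const01[OF _ t])
      fix x assume x: "x \<in> {0..1::real}"
      show "((\<lambda>t. (q t + k * E t) * exp (- (k*t))) has_real_derivative 0) (at x within {0..1})"
        using dE[OF x] dq'[OF x]
        by (auto intro!: derivative_eq_intros simp: algebra_simps power2_eq_square)
    qed
    then show ?thesis using E0 q0 by simp
  qed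
  have g2: "(q t - k * E t) * exp (k*t) = s0 - k" if t: "t \<in> {0..1}" for t
  proof -
    have "(q t - k * E t) * exp (k*t) = (q 0 - k * E 0) * exp (k*0)"
    proof (rule const01[OF _ t])
      fix x assume x: "x \<in> {0..1::real}"
      show "((\<lambda>t. (q t - k * E t) * exp (k*t)) has_real_derivative 0) (at x within {0..1})"
        using dE[OF x] dq'[OF x]
        by (auto intro!: derivative_eq_intros simp: algebra_simps power2_eq_square)
    qed
    then show ?thesis using E0 q0 by simp
  qed
  define A where "A = (s0 + k) / (2*k)"
  define B where "B = (k - s0) / (2*k)"
  have AB1: "A + B = 1" using k0 by (simp add: A_def B_def field_simps)
  have hE: "E t = A * exp (k*t) + B / exp (k*t)" if t: "t \<in> {0..1}" for t
  proof -
    have em: "exp (- (k*t)) = 1 / exp (k*t)" by (simp add: exp_minus inverse_eq_divide)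
    have e1: "q t + k * E t = (s0 + k) * exp (k*t)" using g1[OF t] unfolding em
      by (simp add: field_simps)
    have e2: "q t - k * E t = (s0 - k) / exp (k*t)" using g2[OF t]
      by (simp add: field_simps)
    have w: "2 * k * E t = (s0 + k) * exp (k*t) - (s0 - k) / exp (k*t)" using e1 e2 by simp
    have "E t = (2 * k * E t) / (2 * k)" using k0 by simp
    also have "\<dots> = ((s0 + k) * exp (k*t) - (s0 - k) / exp (k*t)) / (2 * k)" using w by simp
    also have "\<dots> = A * exp (k*t) + B / exp (k*t)"
      unfolding A_def B_def using aux3[OF k0, of "exp (k*t)" s0] by simp
    finally show ?thesis .
  qed
  have A1: "A = 1 - B" using AB1 by simp
  define X where "X = exp k"
  have X1: "X > 1" using k0 by (simp add: X_def)
  have eD: "exp D = A * X + B / X" using E1 hE[of 1] by (simp add: X_def)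
  have absk: "\<not> (-k < s0 \<and> s0 < k)"
  proof
    assume a: "-k < s0 \<and> s0 < k"
    then have Ap: "A > 0" and Bp: "B > 0" using k0 by (auto simp: A_def B_def)
    have "exp D - X = B * (1 / X - X)" using eD X1 unfolding A1 by (simp add: field_simps)
    moreover have "1 / X - X < 0" using X1 by (simp add: field_simps) (smt (verit) mult_le_cancel_left1)
    ultimately have "exp D < X" using Bp by (smt (verit) mult_pos_neg)
    then have u: "D < k" by (simp add: X_def)
    have "exp D - 1 / X = A * (X - 1 / X)" using eD X1 unfolding A1 by (simp add: field_simps)
    moreover have "X - 1 / X > 0" using X1 by (simp add: field_simps) (smt (verit) mult_le_cancel_left1)
    ultimately have "exp D > 1 / X" using Ap by (smt (verit) mult_pos_pos)
    then have "exp D > exp (-k)" by (simp add: X_def exp_minus inverse_eq_divide)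
    then have l: "-k < D" by simp
    show False using sq_lt_of_abs[OF l u] kD by simp
  qed
  have Xk: "exp (2*k) = X^2"
  proof -
    have "exp (2*k) = exp (k + k)" by simp
    then show ?thesis unfolding exp_add X_def by (simp add: power2_eq_square)
  qed
  have cP: "s0^2 + real d * lam = s0^2 - k^2" using kc by (simp add: c_def)
  show ?thesis
  proof (cases "s0 = k \<or> s0 = -k")
    case True
    have P0: "s0^2 + real d * lam = 0" using True cP by auto
    have "D = k \<or> D = -k"
    proof (cases "s0 = k")
      case True
      then have "A = 1" "B = 0" using k0 by (auto simp: A_def B_def)
      then have "exp D = exp k" using eD by (simp add: X_def)
      then show ?thesis by simp
    next
      case False
      then have "s0 = -k" using \<open>s0 = k \<or> s0 = -k\<close> by simp
      then have "A = 0" "B = 1" using k0 by (auto simp: A_def B_def)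
      then have "exp D = exp (-k)" using eD by (simp add: X_def exp_minus inverse_eq_divide)
      then show ?thesis by simp
    qed
    then have "D^2 = k^2" by auto
    then have "lam = - (D^2) / real d" using lamk by simp
    then have "mfun d D lam = 0" using lneg by (simp add: mfun_def)
    then show ?thesis using P0 by simp
  next
    case False
    with absk have big: "s0 > k \<or> s0 < -k" by auto
    have Dbig: "k^2 < D^2"
    proof (cases "s0 > k")
      case True
      then have Bn: "B < 0" using k0 by (simp add: B_def divide_neg_pos)
      have "exp D - X = B * (1 / X - X)" using eD X1 unfolding A1 by (simp add: field_simps)
      moreover have "1 / X - X < 0" using X1 by (simp add: field_simps) (smt (verit) mult_le_cancel_left1)
      ultimately have "exp D > X" using Bn by (smt (verit) mult_neg_neg)
      then have "D > k" by (simp add: X_def)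
      then show ?thesis using k0 by (intro power_strict_mono) auto
    next
      case False
      then have "s0 < -k" using big by simp
      then have An: "A < 0" using k0 by (simp add: A_def divide_neg_pos)
      have "exp D - 1 / X = A * (X - 1 / X)" using eD X1 unfolding A1 by (simp add: field_simps)
      moreover have "X - 1 / X > 0" using X1 by (simp add: field_simps) (smt (verit) mult_le_cancel_left1)
      ultimately have "exp D < 1 / X" using An by (smt (verit) mult_neg_pos)
      then have "exp D < exp (-k)" by (simp add: X_def exp_minus inverse_eq_divide)
      then have "D < -k" by simp
      then have "k^2 < (-D)^2" using k0 by (intro power_strict_mono) auto
      then show ?thesis by simp
    qed
    have nonfirst: "\<not> (lam = - (D^2) / real d \<and> lam < 0)"
    proof
      assume "lam = - (D^2) / real d \<and> lam < 0"
      then have "- (k^2) / real d = - (D^2) / real d" using lamk by simp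
      then have "k^2 = D^2" using d0 by (simp add: divide_cancel_right)
      then show False using Dbig by simp
    qed
    have sk: "sqrt (real d * - lam) = k" by (simp add: k_def c_def)
    have A0: "A \<noteq> 0" using big k0 by (auto simp: A_def)
    have sk0: "s0 + k \<noteq> 0" using big k0 by auto
    have rat: "- (B / A) = (s0 - k) / (s0 + k)"
    proof -
      show ?thesis using k0 by (simp add: A_def B_def minus_divide_left)
    qed
    have ratp: "- (B / A) > 0" unfolding rat using big k0 by (auto simp: zero_less_divide_iff)
    have X21: "X^2 - 1 \<noteq> 0" using X1 by (simp add: power2_eq_square) (smt (verit) mult_le_cancel_left1)
    have hCm: "(exp (2*k) - exp (D + k)) / (exp (D + k) - 1) = B / A"
    proof -
      have eDk: "exp (D + k) = (1 - B) * X^2 + B" using eD X1 unfolding exp_add A1 X_def[symmetric]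
        by (simp add: field_simps power2_eq_square)
      have "(exp (2*k) - exp (D + k)) / (exp (D + k) - 1) = (B * (X^2 - 1)) / ((1 - B) * (X^2 - 1))"
        unfolding Xk eDk by (rule arg_cong2[where f="(/)"]) (simp_all add: algebra_simps)
      also have "\<dots> = B / A" using X21 A1 by simp
      finally show ?thesis .
    qed
    define r where "r = sqrt (- (B / A))"
    have r0: "r > 0" using ratp by (simp add: r_def)
    have r2: "r^2 = - (B / A)" using ratp by (simp add: r_def)
    have Br: "B = - A * r^2" using r2 A0 by (simp add: field_simps)
    have r1: "r \<noteq> 1"
    proof
      assume "r = 1"
      then have "(s0 - k) / (s0 + k) = 1" using r2 rat by simp
      then have "s0 - k = s0 + k" using big k0 by (auto simp: divide_eq_1_iff)
      then show False using k0 by simp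
    qed
    have mval: "mfun d D lam = \<bar>ln (((X / r + 1) * (- 1 / r + 1)) / ((1 - X / r) * (1 + 1 / r)))\<bar>"
      unfolding mfun_def Let_def if_not_P[OF nonfirst] if_P[OF lneg] sk hCm r_def[symmetric] X_def[symmetric]
      by simp
    have EY: "E t = A * ((exp (k*t))^2 - r^2) / exp (k*t)" if t: "t \<in> {0..1}" for t
      unfolding hE[OF t] Br by (simp add: field_simps power2_eq_square)
    have EYp: "A * ((exp (k*t))^2 - r^2) > 0" if t: "t \<in> {0..1}" for t
    proof -
      have "A * ((exp (k*t))^2 - r^2) / exp (k*t) > 0" using Epos[OF t] EY[OF t] by simp
      then show ?thesis by (simp add: zero_less_divide_iff)
    qed
    have E0p: "A * (1 - r^2) > 0" using EYp[of 0] by simp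
    have pos1: "(exp (k*t) + - r) / (1 - r) > 0" if t: "t \<in> {0..1}" for t
      using aux4[OF EYp[OF t] E0p r0] by simp
    have pos2: "(exp (k*t) + r) / (1 + r) > 0" for t using r0 by (simp add: add_pos_pos)
    have Yr: "exp (k*t) \<noteq> r" if t: "t \<in> {0..1}" for t using pos1[OF t] by auto
    define Hf where "Hf = (\<lambda>t. (ln ((exp (k*t) + - r) / (1 - r)) - ln ((exp (k*t) + r) / (1 + r))) / (2*r*k*A))"
    have dH: "(Hf has_real_derivative (1 / E t)) (at t within {0..1})" if t: "t \<in> {0..1}" for t
    proof -
      have "(Hf has_real_derivative ((k * exp (k*t) / (exp (k*t) + - r) - k * exp (k*t) / (exp (k*t) + r)) / (2*r*k*A)))
          (at t within {0..1})"
        unfolding Hf_def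
        by (intro DERIV_cdivide DERIV_diff dlnlin pos1[OF t] pos2)
      moreover have "(k * exp (k*t) / (exp (k*t) + - r) - k * exp (k*t) / (exp (k*t) + r)) / (2*r*k*A) = 1 / E t"
        unfolding EY[OF t] using aux5[of "exp (k*t)" r k A] r0 k0 A0 Yr[OF t]
        by (simp add: mult.commute)
      ultimately show ?thesis by simp
    qed
    have H0: "Hf 0 = 0" unfolding Hf_def using r1 r0 by simp
    have J: "J = Hf 1" unfolding J_def using ftc01[OF dH] H0 by simp
    have XR: "X \<noteq> r" using Yr[of 1] by (simp add: X_def)
    have lnQ: "ln (((X / r + 1) * (- 1 / r + 1)) / ((1 - X / r) * (1 + 1 / r))) = - (2*r*k*A) * J"
    proof -
      have "ln (((X / r + 1) * (- 1 / r + 1)) / ((1 - X / r) * (1 + 1 / r)))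
          = ln (((X+r)/(1+r))/((X + -r)/(1-r)))" using aux6[OF r0 XR r1] by simp
      also have "\<dots> = ln ((X+r)/(1+r)) - ln ((X + -r)/(1-r))"
        by (rule ln_divide_pos) (use pos2[of 1] pos1[of 1] in \<open>simp_all add: X_def\<close>)
      also have "\<dots> = - (2*r*k*A) * Hf 1" unfolding Hf_def X_def using r0 k0 A0 by simp
      finally show ?thesis unfolding J .
    qed
    have sqP: "s0^2 + real d * lam = (2*r*k*A)^2"
    proof -
      have "(2*r*k*A)^2 = 4 * r^2 * k^2 * A^2" by (simp add: power_mult_distrib)
      also have "\<dots> = - 4 * B * A * k^2" unfolding r2 using A0 by (simp add: power2_eq_square field_simps)
      also have "\<dots> = s0^2 - k^2" using k0 by (simp add: A_def B_def power2_eq_square field_simps)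
      finally show ?thesis using cP by simp
    qed
    have Jp: "J > 0" using Jpos by (simp add: J_def)
    have "mfun d D lam = \<bar>2*r*k*A\<bar> * J" unfolding mval lnQ using Jp by (simp add: abs_mult)
    also have "\<dots> = sqrt (s0^2 + real d * lam) * J" unfolding sqP by simp
    finally show ?thesis unfolding sqP J_def by simp
  qed
qed

theorem lemma3p4:
  fixes d :: nat and Dc :: "nat \<Rightarrow> real" and lam :: real
    and L :: "nat \<Rightarrow> real \<Rightarrow> real"
  assumes "d \<ge> 2"
  defines "D \<equiv> (\<Sum>i<d. Dc i)"
  assumes "- (D^2) / real d \<le> lam" and "lam < pi^2 / real d"
    and "\<forall>i<d. \<forall>t\<in>{0..1}.
           (L i has_real_derivative (- (\<Sum>k<d. L k t) * L i t - lam)) (at t within {0..1})"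
    and "\<forall>i<d. integral {0..1} (L i) = Dc i"
  shows "(real d - 1) * lam = (\<Sum>i<d. (L i 0)^2) - (\<Sum>i<d. L i 0)^2
         \<longleftrightarrow> mfun d D lam = sqrt (real d / (real d - 1) * (\<Sum>i<d. (Dc i - D / real d)^2))"
proof -
  note d2 = assms(1)
  note lD = assms(3)
  note lpi = assms(4)
  have dL: "(L i has_real_derivative (- (\<Sum>k<d. L k t) * L i t - lam)) (at t within {0..1})"
    if "i < d" "t \<in> {0..1}" for i t using assms(5) that by blast
  have iL: "integral {0..1} (L i) = Dc i" if "i < d" for i using assms(6) that by blast
  have d0: "d > 0" using d2 by simp
  have rd: "real d > 1" using d2 by simp
  define Sm where "Sm = (\<lambda>t. \<Sum>k<d. L k t)"
  have dS: "(Sm has_real_derivative (- ((Sm t)^2) - real d * lam)) (at t within {0..1})"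
    if t: "t \<in> {0..1}" for t
  proof -
    have "(Sm has_real_derivative (\<Sum>i<d. - (\<Sum>k<d. L k t) * L i t - lam)) (at t within {0..1})"
      unfolding Sm_def by (intro DERIV_sum dL t) simp
    moreover have "(\<Sum>i<d. - (\<Sum>k<d. L k t) * L i t - lam) = - ((Sm t)^2) - real d * lam"
      by (simp add: Sm_def sum_subtractf sum_negf sum_distrib_left[symmetric] power2_eq_square)
    ultimately show ?thesis by simp
  qed
  have cL: "continuous_on {0..1} (L i)" if "i < d" for i
    by (rule DERIV_continuous_on) (rule dL[OF that])
  have cS: "continuous_on {0..1} Sm"
    by (rule DERIV_continuous_on) (rule dS)
  define E where "E = (\<lambda>t. exp (integral {0..t} Sm))"
  define q where "q = (\<lambda>t. Sm t * E t)"
  have dE: "(E has_real_derivative q t) (at t within {0..1})" if t: "t \<in> {0..1}" for t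
  proof -
    have "((\<lambda>t. integral {0..t} Sm) has_real_derivative Sm t) (at t within {0..1})"
      by (rule integral_has_real_derivative[OF cS t])
    then have "(E has_real_derivative (exp (integral {0..t} Sm) * Sm t)) (at t within {0..1})"
      unfolding E_def by (rule DERIV_chain2[OF DERIV_exp])
    then show ?thesis by (simp add: q_def E_def mult.commute)
  qed
  have dq: "(q has_real_derivative (- (real d * lam) * E t)) (at t within {0..1})"
    if t: "t \<in> {0..1}" for t
  proof -
    have "(q has_real_derivative (Sm t * q t + (- ((Sm t)^2) - real d * lam) * E t)) (at t within {0..1})"
    proof -
      have "((\<lambda>t. Sm t * E t) has_real_derivative (Sm t * q t + (- ((Sm t)^2) - real d * lam) * E t)) (at t within {0..1})"
        by (rule DERIV_mult'[OF dS[OF t] dE[OF t]])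
      then show ?thesis unfolding q_def[symmetric] .
    qed
    moreover have "Sm t * q t + (- ((Sm t)^2) - real d * lam) * E t = - (real d * lam) * E t"
      by (simp add: q_def power2_eq_square algebra_simps)
    ultimately show ?thesis by simp
  qed
  have Epos: "E t > 0" for t by (simp add: E_def)
  have E0: "E 0 = 1" by (simp add: E_def)
  have q0: "q 0 = Sm 0" by (simp add: q_def E0)
  have intL: "L i integrable_on {0..1}" if "i < d" for i
    by (rule integrable_continuous_real[OF cL[OF that]])
  have intS: "integral {0..1} Sm = D"
  proof -
    have "integral {0..1} Sm = (\<Sum>i<d. integral {0..1} (L i))"
      unfolding Sm_def by (rule integral_sum) (auto intro: intL)
    then show ?thesis using iL by (simp add: D_def)
  qed
  have E1: "E 1 = exp D" by (simp add: E_def intS)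
  have cE: "continuous_on {0..1} E"
    by (rule DERIV_continuous_on) (rule dE)
  have cE': "continuous_on {0..1} (\<lambda>t. 1 / E t)"
    using cE Epos by (intro continuous_intros) (auto simp: less_imp_neq[symmetric])
  have intE: "(\<lambda>t. 1 / E t) integrable_on {0..1}"
    by (rule integrable_continuous_real[OF cE'])
  define J where "J = integral {0..1} (\<lambda>t. 1 / E t)"
  have Jpos: "J > 0"
  proof -
    obtain x where x: "x \<in> {0..1::real}" and mx: "\<forall>y\<in>{0..1}. E y \<le> E x"
      using continuous_attains_sup[OF compact_Icc _ cE] by auto
    have "((\<lambda>t. 1 / E x) has_integral (1 / E x)) {0..1::real}"
      using has_integral_const_real[of "1 / E x" 0 1] by simp
    moreover have "((\<lambda>t. 1 / E t) has_integral J) {0..1}"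
      unfolding J_def using intE by (rule integrable_integral)
    ultimately have "1 / E x \<le> J"
      by (rule has_integral_le) (use mx Epos in \<open>simp add: frac_le\<close>)
    then show ?thesis using Epos[of x] by (smt (verit) divide_pos_pos)
  qed
  define u0 where "u0 = (\<lambda>i. L i 0 - Sm 0 / real d)"
  have uE: "(L i t - Sm t / real d) * E t = u0 i" if i: "i < d" and t: "t \<in> {0..1}" for i t
  proof -
    have "(L i t - Sm t / real d) * E t = (L i 0 - Sm 0 / real d) * E 0"
    proof (rule const01[OF _ t])
      fix x assume x: "x \<in> {0..1::real}"
      have dL': "(L i has_real_derivative (- Sm x * L i x - lam)) (at x within {0..1})"
        using dL[OF i x] by (simp add: Sm_def)
      have "((\<lambda>t. (L i t - Sm t / real d) * E t) has_real_derivative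
         ((- Sm x * L i x - lam) - (- ((Sm x)^2) - real d * lam) / real d) * E x + q x * (L i x - Sm x / real d))
         (at x within {0..1})"
        by (rule DERIV_mult[OF DERIV_diff[OF dL' DERIV_cdivide[OF dS[OF x]]] dE[OF x]])
      moreover have "((- Sm x * L i x - lam) - (- ((Sm x)^2) - real d * lam) / real d) * E x
          + q x * (L i x - Sm x / real d) = 0"
        using d0 by (simp add: q_def field_simps power2_eq_square)
      ultimately show "((\<lambda>t. (L i t - Sm t / real d) * E t) has_real_derivative 0) (at x within {0..1})"
        by simp
    qed
    then show ?thesis by (simp add: E0 u0_def)
  qed
  have Dci: "Dc i - D / real d = u0 i * J" if i: "i < d" for i
  proof -
    have "Dc i = integral {0..1} (\<lambda>t. u0 i * (1 / E t) + Sm t / real d)"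
      unfolding iL[OF i, symmetric]
    proof (rule Henstock_Kurzweil_Integration.integral_cong)
      fix t assume t: "t \<in> {0..1::real}"
      show "L i t = u0 i * (1 / E t) + Sm t / real d"
        using uE[OF i t] Epos[of t] by (simp add: field_simps)
    qed
    also have "\<dots> = integral {0..1} (\<lambda>t. u0 i * (1 / E t)) + integral {0..1} (\<lambda>t. Sm t / real d)"
      by (rule Henstock_Kurzweil_Integration.integral_add)
        (use cE Epos d0 in \<open>auto intro!: integrable_continuous_real continuous_intros cE' cS simp: less_imp_neq[symmetric]\<close>)
    also have "\<dots> = u0 i * J + D / real d"
      using intE integral_mult[of "\<lambda>t. 1 / E t" "{0..1}" "u0 i"]
        integral_mult[of Sm "{0..1}" "1 / real d"] integrable_continuous_real[OF cS] intS
      by (simp add: J_def)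
    finally show ?thesis by simp
  qed
  define P where "P = (Sm 0)^2 + real d * lam"
  have key: "0 \<le> P \<and> mfun d D lam = sqrt P * J"
  proof (cases "lam > 0")
    case True
    have c0: "0 < real d * lam" using True d0 by simp
    have cpi: "real d * lam < pi^2" using lpi d0 by (simp add: field_simps)
    have k: "0 \<le> (Sm 0)^2 + real d * lam \<and> (let s = sqrt (real d * lam); Cp = arctan ((cos s - exp D) / sin s)
           in \<bar>ln ((tan (Cp + s) + 1 / cos (Cp + s)) / (tan Cp + 1 / cos Cp))\<bar>)
         = sqrt ((Sm 0)^2 + real d * lam) * J"
      unfolding J_def by (rule key_pos[OF c0 cpi dE dq E0 q0 Epos E1]) (use Jpos J_def in auto)
    have "mfun d D lam = (let s = sqrt (real d * lam); Cp = arctan ((cos s - exp D) / sin s)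
           in \<bar>ln ((tan (Cp + s) + 1 / cos (Cp + s)) / (tan Cp + 1 / cos Cp))\<bar>)"
      using True unfolding mfun_def by (simp only: if_False not_less[symmetric] less_imp_neq[OF True, symmetric]) simp
    then show ?thesis using k by (simp add: P_def)
  next
    case False
    show ?thesis
    proof (cases "lam = 0")
      case True
      have k: "0 \<le> (Sm 0)^2 + real d * lam \<and> \<bar>D\<bar> = sqrt ((Sm 0)^2 + real d * lam) * J"
        unfolding J_def by (rule key_zero[OF _ dE dq E0 q0 Epos E1]) (use Jpos J_def True in auto)
      have "mfun d D lam = \<bar>D\<bar>" using True by (simp add: mfun_def)
      then show ?thesis using k by (simp add: P_def)
    next
      case False
      then have ln: "lam < 0" using \<open>\<not> lam > 0\<close> by simp
      show ?thesis
        using key_neg[OF d0 ln lD dE dq E0 q0 Epos E1] Jpos by (simp add: P_def J_def)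
    qed
  qed
  define U where "U = (\<Sum>i<d. (u0 i)^2)"
  have su: "(\<Sum>i<d. u0 i) = 0"
    using d0 by (simp add: u0_def sum_subtractf Sm_def)
  have sL: "(\<Sum>i<d. L i 0) = Sm 0" by (simp add: Sm_def)
  have sL2: "(\<Sum>i<d. (L i 0)^2) = U + (Sm 0)^2 / real d"
  proof -
    have "(\<Sum>i<d. (L i 0)^2) = (\<Sum>i<d. (u0 i)^2 + 2 * (Sm 0 / real d) * u0 i + (Sm 0 / real d)^2)"
    proof (rule sum.cong)
      fix i
      have eq: "L i 0 = u0 i + Sm 0 / real d" by (simp add: u0_def)
      show "(L i 0)^2 = (u0 i)^2 + 2 * (Sm 0 / real d) * u0 i + (Sm 0 / real d)^2"
        unfolding eq by (simp add: power2_eq_square algebra_simps)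
    qed simp
    also have "\<dots> = U + 2 * (Sm 0 / real d) * (\<Sum>i<d. u0 i) + real d * (Sm 0 / real d)^2"
      by (simp add: U_def sum.distrib sum_distrib_left)
    also have "\<dots> = U + (Sm 0)^2 / real d" using su d0 by (simp add: power2_eq_square)
    finally show ?thesis .
  qed
  have sD: "(\<Sum>i<d. (Dc i - D / real d)^2) = J^2 * U"
    by (simp add: Dci U_def power_mult_distrib sum_distrib_left mult.commute)
  have lhs: "((real d - 1) * lam = (\<Sum>i<d. (L i 0)^2) - (\<Sum>i<d. L i 0)^2)
      \<longleftrightarrow> U = (real d - 1) / real d * P"
    unfolding sL sL2 P_def using rd by (auto simp: field_simps)
  have "sqrt P * J = sqrt (P * J^2)" using key Jpos by (simp add: real_sqrt_mult)
  then have rhs: "(mfun d D lam = sqrt (real d / (real d - 1) * (\<Sum>i<d. (Dc i - D / real d)^2)))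
      \<longleftrightarrow> P * J^2 = real d / (real d - 1) * (J^2 * U)"
    unfolding sD using key by simp
  have j2: "J^2 \<noteq> 0" using Jpos by simp
  have "P * J^2 = real d / (real d - 1) * (J^2 * U) \<longleftrightarrow> P * J^2 = (real d / (real d - 1) * U) * J^2"
    by (simp add: mult_ac)
  also have "\<dots> \<longleftrightarrow> P = real d / (real d - 1) * U" using j2 by (rule mult_right_cancel)
  also have "\<dots> \<longleftrightarrow> U = (real d - 1) / real d * P" using rd by (auto simp: field_simps)
  finally have "P * J^2 = real d / (real d - 1) * (J^2 * U) \<longleftrightarrow> U = (real d - 1) / real d * P" .
  then show ?thesis using lhs rhs by simp
qed

end
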